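(* Every finite distributive lattice $L$ with more than one element can be generated from the one-element lattice $\mathbf{1}$ by finitely many expansions $\boxplus$: there are lattices $L_0\cong\mathbf{1},L_1,\dots,L_m$ with $L_m\cong L$ such that for each $i\ge1$, $L_i=L_{i-1}\boxplus K_i$ for some cutting $K_i$ of $L_{i-1}$.
   Context: For a finite poset $P$, $\mathcal{F}(P)$ is the set of filters (up-sets) of $P$ ordered by reverse inclusion; it is a finite distributive lattice with least element $P$ and greatest element $\emptyset$, and $\mathcal{F}(\emptyset)$ is the one-element lattice. Every finite distributive lattice is isomorphic to some $\mathcal{F}(P)$. A cutting of a finite distributive lattice $L$ is an interval $K=[\hat0_K,\hat1_K]$ of $L$ such that every maximal chain of $L$ meets $K$. For a cutting $K$ of $L=\mathcal{F}(P)$, let $S=\hat0_K\setminus\hat1_K$, $S_0$ the set of maximal elements of $P\setminus\hat0_K$, $S_1$ the set of minimal elements of $\hat1_K$. The poset $P_K$ is $P\cup\{x_K\}$ ($x_K$ new) where the order on $P$ is unchanged, $z<x_K$ iff $z\le s$ for some $s\in S_0$, $x_K<y$ iff $y\ge s$ for some $s\in S_1$, and $x_K$ is incomparable to every element of $S$. The convex expansion is $L\boxplus K:=\mathcal{F}(P_K)$. *)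

theory Defs
  imports Main
begin

text \<open>A (finite) poset is represented by a carrier set together with an order
relation; only the values of the relation on the carrier matter.\<close>

definition partial_order_on' :: "'a set \<Rightarrow> ('a \<Rightarrow> 'a \<Rightarrow> bool) \<Rightarrow> bool" where
  "partial_order_on' A le \<longleftrightarrow>
     (\<forall>x\<in>A. le x x) \<and>
     (\<forall>x\<in>A. \<forall>y\<in>A. le x y \<and> le y x \<longrightarrow> x = y) \<and>
     (\<forall>x\<in>A. \<forall>y\<in>A. \<forall>z\<in>A. le x y \<and> le y z \<longrightarrow> le x z)"

definition is_lub :: "'a set \<Rightarrow> ('a \<Rightarrow> 'a \<Rightarrow> bool) \<Rightarrow> 'a \<Rightarrow> 'a \<Rightarrow> 'a \<Rightarrow> bool" where
  "is_lub A le x y s \<longleftrightarrow> s \<in> A \<and> le x s \<and> le y s \<and>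
     (\<forall>u\<in>A. le x u \<and> le y u \<longrightarrow> le s u)"

definition is_glb :: "'a set \<Rightarrow> ('a \<Rightarrow> 'a \<Rightarrow> bool) \<Rightarrow> 'a \<Rightarrow> 'a \<Rightarrow> 'a \<Rightarrow> bool" where
  "is_glb A le x y s \<longleftrightarrow> s \<in> A \<and> le s x \<and> le s y \<and>
     (\<forall>u\<in>A. le u x \<and> le u y \<longrightarrow> le u s)"

definition join_on :: "'a set \<Rightarrow> ('a \<Rightarrow> 'a \<Rightarrow> bool) \<Rightarrow> 'a \<Rightarrow> 'a \<Rightarrow> 'a" where
  "join_on A le x y = (THE s. is_lub A le x y s)"

definition meet_on :: "'a set \<Rightarrow> ('a \<Rightarrow> 'a \<Rightarrow> bool) \<Rightarrow> 'a \<Rightarrow> 'a \<Rightarrow> 'a" where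
  "meet_on A le x y = (THE s. is_glb A le x y s)"

definition lattice_on :: "'a set \<Rightarrow> ('a \<Rightarrow> 'a \<Rightarrow> bool) \<Rightarrow> bool" where
  "lattice_on A le \<longleftrightarrow> partial_order_on' A le \<and> A \<noteq> {} \<and>
     (\<forall>x\<in>A. \<forall>y\<in>A. (\<exists>s. is_lub A le x y s) \<and> (\<exists>s. is_glb A le x y s))"

definition finite_distrib_lattice_on :: "'a set \<Rightarrow> ('a \<Rightarrow> 'a \<Rightarrow> bool) \<Rightarrow> bool" where
  "finite_distrib_lattice_on A le \<longleftrightarrow> finite A \<and> lattice_on A le \<and>
     (\<forall>x\<in>A. \<forall>y\<in>A. \<forall>z\<in>A.
        meet_on A le x (join_on A le y z) = join_on A le (meet_on A le x y) (meet_on A le x z))"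

definition order_iso :: "'a set \<Rightarrow> ('a \<Rightarrow> 'a \<Rightarrow> bool) \<Rightarrow> 'b set \<Rightarrow> ('b \<Rightarrow> 'b \<Rightarrow> bool) \<Rightarrow> bool" where
  "order_iso A le B le' \<longleftrightarrow>
     (\<exists>f. bij_betw f A B \<and> (\<forall>x\<in>A. \<forall>y\<in>A. le x y \<longleftrightarrow> le' (f x) (f y)))"

definition filters :: "'a set \<Rightarrow> ('a \<Rightarrow> 'a \<Rightarrow> bool) \<Rightarrow> 'a set set" where
  "filters P le = {U. U \<subseteq> P \<and> (\<forall>x\<in>U. \<forall>y\<in>P. le x y \<longrightarrow> y \<in> U)}"

definition rev_incl :: "'a set \<Rightarrow> 'a set \<Rightarrow> bool" where
  "rev_incl U V \<longleftrightarrow> V \<subseteq> U"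

definition is_chain_on :: "'a set \<Rightarrow> ('a \<Rightarrow> 'a \<Rightarrow> bool) \<Rightarrow> 'a set \<Rightarrow> bool" where
  "is_chain_on A le C \<longleftrightarrow> C \<subseteq> A \<and> (\<forall>x\<in>C. \<forall>y\<in>C. le x y \<or> le y x)"

definition maximal_chain_on :: "'a set \<Rightarrow> ('a \<Rightarrow> 'a \<Rightarrow> bool) \<Rightarrow> 'a set \<Rightarrow> bool" where
  "maximal_chain_on A le C \<longleftrightarrow> is_chain_on A le C \<and>
     (\<forall>C'. is_chain_on A le C' \<and> C \<subseteq> C' \<longrightarrow> C' = C)"

definition interval_on :: "'a set \<Rightarrow> ('a \<Rightarrow> 'a \<Rightarrow> bool) \<Rightarrow> 'a \<Rightarrow> 'a \<Rightarrow> 'a set" where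
  "interval_on A le a b = {x\<in>A. le a x \<and> le x b}"

definition cutting_on :: "'a set \<Rightarrow> ('a \<Rightarrow> 'a \<Rightarrow> bool) \<Rightarrow> 'a \<Rightarrow> 'a \<Rightarrow> bool" where
  "cutting_on A le a b \<longleftrightarrow> a \<in> A \<and> b \<in> A \<and> le a b \<and>
     (\<forall>C. maximal_chain_on A le C \<longrightarrow> C \<inter> interval_on A le a b \<noteq> {})"

text \<open>The poset P_K for a cutting K = [U0, U1] of F(P) (U0 = bottom of K,
U1 = top of K), with new element xK.  S0 = maximal elements of P - U0,
S1 = minimal elements of U1.\<close>

definition maximal_elems :: "'a set \<Rightarrow> ('a \<Rightarrow> 'a \<Rightarrow> bool) \<Rightarrow> 'a set" where
  "maximal_elems X le = {s\<in>X. \<forall>y\<in>X. le s y \<longrightarrow> y = s}"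

definition minimal_elems :: "'a set \<Rightarrow> ('a \<Rightarrow> 'a \<Rightarrow> bool) \<Rightarrow> 'a set" where
  "minimal_elems X le = {s\<in>X. \<forall>y\<in>X. le y s \<longrightarrow> y = s}"

definition expansion_order ::
  "'a set \<Rightarrow> ('a \<Rightarrow> 'a \<Rightarrow> bool) \<Rightarrow> 'a set \<Rightarrow> 'a set \<Rightarrow> 'a \<Rightarrow> ('a \<Rightarrow> 'a \<Rightarrow> bool)" where
  "expansion_order P le U0 U1 xK = (\<lambda>z w.
      (z \<in> P \<and> w \<in> P \<and> le z w) \<or>
      (z = xK \<and> w = xK) \<or>
      (z \<in> P \<and> w = xK \<and> (\<exists>s\<in>maximal_elems (P - U0) le. le z s)) \<or>
      (z = xK \<and> w \<in> P \<and> (\<exists>s\<in>minimal_elems U1 le. le s w)))"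

text \<open>(P', le') is (up to the irrelevant values of le' outside P') the poset
P_K for the cutting [U0, U1] of F(P), with new element xK.  Note that in F(P)
the order is reverse inclusion, so U1 \<subseteq> U0.  The incomparability of xK with
S = U0 - U1 is a consequence of the two defining clauses.\<close>
definition is_expansion_poset ::
  "'a set \<Rightarrow> ('a \<Rightarrow> 'a \<Rightarrow> bool) \<Rightarrow> 'a set \<Rightarrow> 'a set \<Rightarrow> 'a \<Rightarrow> 'a set \<Rightarrow> ('a \<Rightarrow> 'a \<Rightarrow> bool) \<Rightarrow> bool" where
  "is_expansion_poset P le U0 U1 xK P' le' \<longleftrightarrow>
     xK \<notin> P \<and> P' = insert xK P \<and>
     (\<forall>z\<in>P'. \<forall>w\<in>P'. le' z w \<longleftrightarrow> expansion_order P le U0 U1 xK z w)"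

end

theory Submission
  imports Defs
begin

lemma po_sub: "partial_order_on' A le \<Longrightarrow> B \<subseteq> A \<Longrightarrow> partial_order_on' B le"
  unfolding partial_order_on'_def by blast

lemma po_flip: "partial_order_on' X le \<Longrightarrow> partial_order_on' X (\<lambda>x y. le y x)"
  unfolding partial_order_on'_def by blast

lemma poD:
  assumes "partial_order_on' A le"
  shows po_refl: "x \<in> A \<Longrightarrow> le x x"
    and po_antisym: "x \<in> A \<Longrightarrow> y \<in> A \<Longrightarrow> le x y \<Longrightarrow> le y x \<Longrightarrow> x = y"
    and po_trans: "x \<in> A \<Longrightarrow> y \<in> A \<Longrightarrow> z \<in> A \<Longrightarrow> le x y \<Longrightarrow> le y z \<Longrightarrow> le x z"
  using assms unfolding partial_order_on'_def by blast+

lemma finite_has_min: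
  assumes "finite X" "X \<noteq> {}" "partial_order_on' X le"
  shows "\<exists>m\<in>X. \<forall>y\<in>X. le y m \<longrightarrow> y = m"
  using assms
proof (induction X rule: finite_ne_induct)
  case (singleton x) then show ?case by simp
next
  case (insert x F)
  note po = insert.prems
  have poF: "partial_order_on' F le" using po po_sub by blast
  obtain m where m: "m \<in> F" "\<forall>y\<in>F. le y m \<longrightarrow> y = m" using insert.IH poF by blast
  show ?case
  proof (cases "le x m")
    case True
    have "\<forall>y\<in>insert x F. le y x \<longrightarrow> y = x"
    proof (intro ballI impI)
      fix y assume y: "y \<in> insert x F" "le y x"
      show "y = x"
      proof (cases "y = x")
        case False
        then have yF: "y \<in> F" using y by simp
        have "le y m" using po_trans[OF po, of y x m] True y yF m(1) by simp
        then have "y = m" using m yF by blast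
        then show ?thesis using po_antisym[OF po, of x m] True y m(1) by simp
      qed simp
    qed
    then show ?thesis by blast
  next
    case False
    have "\<forall>y\<in>insert x F. le y m \<longrightarrow> y = m" using False m by auto
    then show ?thesis using m(1) by blast
  qed
qed

lemma finite_max_above:
  assumes "finite X" "partial_order_on' X le" "z \<in> X"
  shows "\<exists>s\<in>maximal_elems X le. le z s"
proof -
  let ?Y = "{y\<in>X. le z y}"
  have "finite ?Y" using assms(1) by simp
  moreover have "?Y \<noteq> {}" using assms(3) po_refl[OF assms(2) assms(3)] by blast
  moreover have "partial_order_on' ?Y (\<lambda>x y. le y x)"
    by (rule po_flip, rule po_sub[OF assms(2)]) blast
  ultimately obtain s where s: "s \<in> ?Y" "\<forall>y\<in>?Y. le s y \<longrightarrow> y = s"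
    using finite_has_min[of ?Y "\<lambda>x y. le y x"] by blast
  have "\<forall>y\<in>X. le s y \<longrightarrow> y = s"
  proof (intro ballI impI)
    fix y assume "y \<in> X" "le s y"
    then have "le z y" using po_trans[OF assms(2), of z s y] s(1) assms(3) by simp
    then show "y = s" using s(2) \<open>y \<in> X\<close> \<open>le s y\<close> by blast
  qed
  then have "s \<in> maximal_elems X le"
    unfolding maximal_elems_def using s(1) by blast
  then show ?thesis using s by blast
qed

lemma lub_unique: "partial_order_on' A le \<Longrightarrow> is_lub A le x y s \<Longrightarrow> is_lub A le x y t \<Longrightarrow> s = t"
  unfolding partial_order_on'_def is_lub_def by blast

lemma glb_unique: "partial_order_on' A le \<Longrightarrow> is_glb A le x y s \<Longrightarrow> is_glb A le x y t \<Longrightarrow> s = t"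
  unfolding partial_order_on'_def is_glb_def by blast

lemma join_is_lub:
  assumes "lattice_on A le" "x \<in> A" "y \<in> A"
  shows "is_lub A le x y (join_on A le x y)"
proof -
  have po: "partial_order_on' A le" using assms(1) unfolding lattice_on_def by blast
  obtain s where "is_lub A le x y s" using assms unfolding lattice_on_def by blast
  then have "\<exists>!s. is_lub A le x y s" using lub_unique[OF po] by blast
  then show ?thesis unfolding join_on_def by (rule theI')
qed

lemma meet_is_glb:
  assumes "lattice_on A le" "x \<in> A" "y \<in> A"
  shows "is_glb A le x y (meet_on A le x y)"
proof -
  have po: "partial_order_on' A le" using assms(1) unfolding lattice_on_def by blast
  obtain s where "is_glb A le x y s" using assms unfolding lattice_on_def by blast
  then have "\<exists>!s. is_glb A le x y s" using glb_unique[OF po] by blast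
  then show ?thesis unfolding meet_on_def by (rule theI')
qed

lemma order_iso_sym:
  assumes "order_iso A le B le'" shows "order_iso B le' A le"
proof -
  obtain f where b: "bij_betw f A B" and o: "\<forall>x\<in>A. \<forall>y\<in>A. le x y \<longleftrightarrow> le' (f x) (f y)"
    using assms unfolding order_iso_def by blast
  let ?g = "inv_into A f"
  have "bij_betw ?g B A" using b by (rule bij_betw_inv_into)
  moreover have "\<forall>x\<in>B. \<forall>y\<in>B. le' x y \<longleftrightarrow> le (?g x) (?g y)"
  proof (intro ballI)
    fix x y assume "x\<in>B" "y\<in>B"
    then have "?g x \<in> A" "?g y \<in> A" "f (?g x) = x" "f (?g y) = y" using b
      by (auto simp: bij_betw_def inv_into_into f_inv_into_f)
    then show "le' x y \<longleftrightarrow> le (?g x) (?g y)" using o by metis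
  qed
  ultimately show ?thesis unfolding order_iso_def by blast
qed

lemma order_iso_trans:
  assumes "order_iso A r B s" "order_iso B s C t" shows "order_iso A r C t"
proof -
  obtain f where f: "bij_betw f A B" "\<forall>x\<in>A. \<forall>y\<in>A. r x y \<longleftrightarrow> s (f x) (f y)"
    using assms(1) unfolding order_iso_def by blast
  obtain g where g: "bij_betw g B C" "\<forall>x\<in>B. \<forall>y\<in>B. s x y \<longleftrightarrow> t (g x) (g y)"
    using assms(2) unfolding order_iso_def by blast
  have "bij_betw (g \<circ> f) A C" using f g bij_betw_trans by blast
  moreover have "\<forall>x\<in>A. \<forall>y\<in>A. r x y \<longleftrightarrow> t ((g \<circ> f) x) ((g \<circ> f) y)"
    using f g bij_betw_apply[OF f(1)] by simp
  ultimately show ?thesis unfolding order_iso_def by blast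
qed

lemma filters_transfer:
  assumes b: "bij_betw g N J" and R: "\<forall>a\<in>N. \<forall>b\<in>N. R a b \<longleftrightarrow> le (g a) (g b)"
  shows "order_iso (filters N R) rev_incl (filters J le) rev_incl"
proof -
  have inj: "inj_on g N" and img: "g ` N = J" using b by (auto simp: bij_betw_def)
  have "bij_betw (image g) (filters N R) (filters J le)"
    unfolding bij_betw_def
  proof (intro conjI)
    show "inj_on (image g) (filters N R)"
    proof (rule inj_onI)
      fix V W assume "V \<in> filters N R" "W \<in> filters N R" "g ` V = g ` W"
      then show "V = W" using inj_on_image_eq_iff[OF inj, of V W] unfolding filters_def by simp
    qed
    show "image g ` filters N R = filters J le"
    proof
      show "image g ` filters N R \<subseteq> filters J le"
      proof
        fix W assume "W \<in> image g ` filters N R"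
        then obtain V where V: "V \<in> filters N R" "W = g ` V" by blast
        have "W \<subseteq> J" using V img unfolding filters_def by blast
        moreover have "\<forall>x\<in>W. \<forall>y\<in>J. le x y \<longrightarrow> y \<in> W"
        proof (intro ballI impI)
          fix x y assume "x \<in> W" "y \<in> J" "le x y"
          then obtain v w where "v \<in> V" "x = g v" "w \<in> N" "y = g w" using V img by blast
          then show "y \<in> W" using V R \<open>le x y\<close> unfolding filters_def by blast
        qed
        ultimately show "W \<in> filters J le" unfolding filters_def by blast
      qed
      show "filters J le \<subseteq> image g ` filters N R"
      proof
        fix U assume U: "U \<in> filters J le"
        let ?V = "{v\<in>N. g v \<in> U}"
        have "?V \<in> filters N R" unfolding filters_def
        proof (safe)
          fix x y assume "x \<in> N" "g x \<in> U" "y \<in> N" "R x y"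
          then have "le (g x) (g y)" "g y \<in> J" using R img by auto
          then show "g y \<in> U" using U \<open>g x \<in> U\<close> unfolding filters_def by blast
        qed
        moreover have "U \<subseteq> g ` N" using U img unfolding filters_def by blast
        then have "g ` ?V = U" by blast
        ultimately show "U \<in> image g ` filters N R" by blast
      qed
    qed
  qed
  moreover have "\<forall>V\<in>filters N R. \<forall>W\<in>filters N R. rev_incl V W \<longleftrightarrow> rev_incl (g ` V) (g ` W)"
  proof (intro ballI)
    fix V W assume "V \<in> filters N R" "W \<in> filters N R"
    then have VW: "V \<subseteq> N" "W \<subseteq> N" unfolding filters_def by auto
    show "rev_incl V W \<longleftrightarrow> rev_incl (g ` V) (g ` W)"
      unfolding rev_incl_def
    proof
      assume "g ` W \<subseteq> g ` V"
      then show "W \<subseteq> V" using inj_on_image_mem_iff[OF inj _ VW(1)] VW(2) by blast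
    qed auto
  qed
  ultimately show ?thesis unfolding order_iso_def by blast
qed

definition jp :: "'a set \<Rightarrow> ('a \<Rightarrow> 'a \<Rightarrow> bool) \<Rightarrow> 'a set" where
  "jp A le = {j\<in>A. (\<exists>x\<in>A. \<not> le j x) \<and>
      (\<forall>x\<in>A. \<forall>y\<in>A. \<forall>s. is_lub A le x y s \<longrightarrow> le j s \<longrightarrow> le j x \<or> le j y)}"

lemma fdl_D:
  assumes "finite_distrib_lattice_on A le"
  shows "finite A" "lattice_on A le" "partial_order_on' A le"
    "\<And>x y z. x \<in> A \<Longrightarrow> y \<in> A \<Longrightarrow> z \<in> A \<Longrightarrow>
        meet_on A le x (join_on A le y z) = join_on A le (meet_on A le x y) (meet_on A le x z)"
  using assms unfolding finite_distrib_lattice_on_def lattice_on_def by blast+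

lemma bottom_ex:
  assumes "finite_distrib_lattice_on A le"
  shows "\<exists>z\<in>A. \<forall>x\<in>A. le z x"
proof -
  note D = fdl_D[OF assms]
  have "A \<noteq> {}" using D(2) unfolding lattice_on_def by blast
  then obtain m where m: "m \<in> A" "\<forall>y\<in>A. le y m \<longrightarrow> y = m"
    using finite_has_min[OF D(1) _ D(3)] by blast
  have "\<forall>x\<in>A. le m x"
  proof
    fix x assume x: "x \<in> A"
    have g: "is_glb A le m x (meet_on A le m x)" using meet_is_glb[OF D(2) m(1) x] .
    then have "meet_on A le m x = m" using m unfolding is_glb_def by blast
    then show "le m x" using g unfolding is_glb_def by simp
  qed
  then show ?thesis using m(1) by blast
qed

lemma sep:
  assumes fdl: "finite_distrib_lattice_on A le" and a: "a \<in> A" and b: "b \<in> A" and nab: "\<not> le a b"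
  shows "\<exists>j\<in>jp A le. le j a \<and> \<not> le j b"
proof -
  note D = fdl_D[OF fdl]
  note po = D(3)
  let ?X = "{x\<in>A. le x a \<and> \<not> le x b}"
  have "finite ?X" using D(1) by simp
  moreover have "?X \<noteq> {}" using a nab po_refl[OF po a] by blast
  moreover have "partial_order_on' ?X le" by (rule po_sub[OF po]) blast
  ultimately obtain j where j: "j \<in> ?X" "\<forall>y\<in>?X. le y j \<longrightarrow> y = j"
    using finite_has_min[of ?X le] by blast
  have jA: "j \<in> A" and ja: "le j a" and jb: "\<not> le j b" using j(1) by auto
  have "\<forall>x\<in>A. \<forall>y\<in>A. \<forall>s. is_lub A le x y s \<longrightarrow> le j s \<longrightarrow> le j x \<or> le j y"
  proof (intro ballI allI impI)
    fix x y s assume x: "x \<in> A" and y: "y \<in> A" and s: "is_lub A le x y s" and js: "le j s"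
    have sA: "s \<in> A" using s unfolding is_lub_def by blast
    have sj: "s = join_on A le x y" using lub_unique[OF po s join_is_lub[OF D(2) x y]] .
    have "is_glb A le j s j" unfolding is_glb_def using jA js po_refl[OF po jA] by blast
    then have mj: "meet_on A le j s = j" using glb_unique[OF po _ meet_is_glb[OF D(2) jA sA]] by metis
    define p where "p = meet_on A le j x"
    define q where "q = meet_on A le j y"
    have gp: "is_glb A le j x p" unfolding p_def by (rule meet_is_glb[OF D(2) jA x])
    have gq: "is_glb A le j y q" unfolding q_def by (rule meet_is_glb[OF D(2) jA y])
    have pA: "p \<in> A" "le p j" "le p x" using gp unfolding is_glb_def by auto
    have qA: "q \<in> A" "le q j" "le q y" using gq unfolding is_glb_def by auto
    have jpq: "j = join_on A le p q" using D(4)[OF jA x y] mj sj p_def q_def by simp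
    have lpq: "is_lub A le p q j" using join_is_lub[OF D(2) pA(1) qA(1)] jpq by simp
    show "le j x \<or> le j y"
    proof (rule ccontr)
      assume "\<not> (le j x \<or> le j y)"
      then have "p \<noteq> j" "q \<noteq> j" using pA qA by auto
      have pa: "le p a" using po_trans[OF po pA(1) jA a pA(2) ja] .
      have qa: "le q a" using po_trans[OF po qA(1) jA a qA(2) ja] .
      have "le p b" using j(2) pA \<open>p \<noteq> j\<close> pa by blast
      moreover have "le q b" using j(2) qA \<open>q \<noteq> j\<close> qa by blast
      ultimately have "le j b" using lpq b unfolding is_lub_def by blast
      then show False using jb by simp
    qed
  qed
  then have "j \<in> jp A le" unfolding jp_def using jA b jb by blast
  then show ?thesis using ja jb by blast
qed

lemma downset_rep:
  assumes fdl: "finite_distrib_lattice_on A le"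
  shows "finite D \<Longrightarrow> D \<subseteq> jp A le \<Longrightarrow> \<exists>a\<in>A. \<forall>j\<in>jp A le. le j a \<longleftrightarrow> (\<exists>d\<in>D. le j d)"
proof (induction D rule: finite_induct)
  case empty
  note DD = fdl_D[OF fdl]
  obtain z where z: "z \<in> A" "\<forall>x\<in>A. le z x" using bottom_ex[OF fdl] by blast
  have "\<forall>j\<in>jp A le. \<not> le j z"
  proof
    fix j assume j: "j \<in> jp A le"
    then obtain x where x: "x \<in> A" "\<not> le j x" and jA: "j \<in> A" unfolding jp_def by blast
    show "\<not> le j z"
    proof
      assume "le j z"
      then have "le j x" using po_trans[OF DD(3) jA z(1) x(1)] z x by blast
      then show False using x by simp
    qed
  qed
  then show ?case using z(1) by blast
next
  case (insert d F)
  note DD = fdl_D[OF fdl]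
  obtain a where a: "a \<in> A" "\<forall>j\<in>jp A le. le j a \<longleftrightarrow> (\<exists>d\<in>F. le j d)"
    using insert by blast
  have dA: "d \<in> A" using insert.prems unfolding jp_def by blast
  define s where "s = join_on A le a d"
  have ls: "is_lub A le a d s" unfolding s_def by (rule join_is_lub[OF DD(2) a(1) dA])
  have sA: "s \<in> A" "le a s" "le d s" using ls unfolding is_lub_def by auto
  have "\<forall>j\<in>jp A le. le j s \<longleftrightarrow> (\<exists>d'\<in>insert d F. le j d')"
  proof
    fix j assume j: "j \<in> jp A le"
    have jA: "j \<in> A" using j unfolding jp_def by blast
    show "le j s \<longleftrightarrow> (\<exists>d'\<in>insert d F. le j d')"
    proof
      assume "le j s"
      then have "le j a \<or> le j d" using j a(1) dA ls unfolding jp_def by blast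
      then show "\<exists>d'\<in>insert d F. le j d'" using a j by blast
    next
      assume "\<exists>d'\<in>insert d F. le j d'"
      then have "le j a \<or> le j d" using a j by blast
      then show "le j s" using po_trans[OF DD(3) jA a(1) sA(1)] po_trans[OF DD(3) jA dA sA(1)] sA by blast
    qed
  qed
  then show ?case using sA(1) by blast
qed

lemma birkhoff:
  assumes fdl: "finite_distrib_lattice_on A le"
  shows "order_iso A le (filters (jp A le) le) rev_incl"
proof -
  note DD = fdl_D[OF fdl]
  note po = DD(3)
  let ?J = "jp A le"
  have JA: "?J \<subseteq> A" unfolding jp_def by blast
  define psi where "psi a = {j\<in>?J. \<not> le j a}" for a
  have ord: "\<forall>a\<in>A. \<forall>b\<in>A. le a b \<longleftrightarrow> rev_incl (psi a) (psi b)"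
  proof (intro ballI)
    fix a b assume a: "a \<in> A" and b: "b \<in> A"
    show "le a b \<longleftrightarrow> rev_incl (psi a) (psi b)"
    proof
      assume ab: "le a b"
      show "rev_incl (psi a) (psi b)" unfolding rev_incl_def psi_def
      proof safe
        fix j assume "j \<in> ?J" "\<not> le j b" "le j a"
        then show False using po_trans[OF po _ a b _ ab] JA by blast
      qed
    next
      assume r: "rev_incl (psi a) (psi b)"
      show "le a b"
      proof (rule ccontr)
        assume "\<not> le a b"
        then obtain j where "j \<in> ?J" "le j a" "\<not> le j b" using sep[OF fdl a b] by blast
        then show False using r unfolding rev_incl_def psi_def by blast
      qed
    qed
  qed
  have inj: "inj_on psi A"
  proof (rule inj_onI)
    fix a b assume a: "a \<in> A" and b: "b \<in> A" and e: "psi a = psi b"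
    have "le a b" "le b a" using ord a b e unfolding rev_incl_def by auto
    then show "a = b" using po_antisym[OF po a b] by blast
  qed
  have img: "psi ` A = filters ?J le"
  proof
    show "psi ` A \<subseteq> filters ?J le"
    proof
      fix U assume "U \<in> psi ` A"
      then obtain a where a: "a \<in> A" "U = psi a" by blast
      show "U \<in> filters ?J le" unfolding filters_def a(2) psi_def
      proof safe
        fix x y assume "x \<in> ?J" "\<not> le x a" "y \<in> ?J" "le x y" "le y a"
        then show False using po_trans[OF po _ _ a(1)] JA by blast
      qed
    qed
    show "filters ?J le \<subseteq> psi ` A"
    proof
      fix U assume U: "U \<in> filters ?J le"
      let ?D = "?J - U"
      have "finite ?D" using DD(1) JA finite_subset by blast
      then obtain a where a: "a \<in> A" "\<forall>j\<in>?J. le j a \<longleftrightarrow> (\<exists>d\<in>?D. le j d)"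
        using downset_rep[OF fdl] by blast
      have "\<forall>j\<in>?J. (\<exists>d\<in>?D. le j d) \<longleftrightarrow> j \<notin> U"
      proof
        fix j assume j: "j \<in> ?J"
        show "(\<exists>d\<in>?D. le j d) \<longleftrightarrow> j \<notin> U"
        proof
          assume "\<exists>d\<in>?D. le j d"
          then obtain d where "d \<in> ?D" "le j d" by blast
          then show "j \<notin> U" using U unfolding filters_def by blast
        next
          assume "j \<notin> U"
          then show "\<exists>d\<in>?D. le j d" using j po_refl[OF po] JA by blast
        qed
      qed
      then have "psi a = U" using a U unfolding psi_def filters_def by blast
      then show "U \<in> psi ` A" using a(1) by blast
    qed
  qed
  have "bij_betw psi A (filters ?J le)" using inj img by (simp add: bij_betw_def)
  then show ?thesis unfolding order_iso_def using ord by blast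
qed

lemma linext:
  "finite Q \<Longrightarrow> partial_order_on' Q le \<Longrightarrow>
   \<exists>g. bij_betw g {..<card Q} Q \<and> (\<forall>a<card Q. \<forall>b<card Q. le (g a) (g b) \<longrightarrow> a \<le> b)"
proof (induction "card Q" arbitrary: Q)
  case 0
  then have "Q = {}" by simp
  then show ?case by (simp add: bij_betw_def)
next
  case (Suc n)
  then have Qne: "Q \<noteq> {}" by auto
  obtain q where q: "q \<in> Q" "\<forall>y\<in>Q. le q y \<longrightarrow> y = q"
    using finite_has_min[OF Suc.prems(1) Qne po_flip[OF Suc.prems(2)]] by blast
  let ?Q = "Q - {q}"
  have cQ: "card ?Q = n" using Suc.hyps(2) q(1) Suc.prems(1) by simp
  have fQ: "finite ?Q" using Suc.prems(1) by simp
  have poQ: "partial_order_on' ?Q le" by (rule po_sub[OF Suc.prems(2)]) blast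
  have "\<exists>g. bij_betw g {..<card ?Q} ?Q \<and> (\<forall>a<card ?Q. \<forall>b<card ?Q. le (g a) (g b) \<longrightarrow> a \<le> b)"
    by (rule Suc.hyps(1)[OF cQ[symmetric] fQ poQ])
  then obtain g' where g': "bij_betw g' {..<n} ?Q" "\<forall>a<n. \<forall>b<n. le (g' a) (g' b) \<longrightarrow> a \<le> b"
    unfolding cQ by blast
  define g where "g = g'(n := q)"
  have ga: "\<And>a. a \<in> {..<n} \<Longrightarrow> g a = g' a" unfolding g_def by simp
  have b1: "bij_betw g {..<n} ?Q" using bij_betw_cong[of "{..<n}" g g' ?Q, OF ga] g'(1) by blast
  have gn: "g n = q" unfolding g_def by simp
  have "n \<notin> {..<n}" by simp
  moreover have "g n \<notin> ?Q" using gn by simp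
  ultimately have "bij_betw g ({..<n} \<union> {n}) (?Q \<union> {g n})"
    using notIn_Un_bij_betw3[of n "{..<n}" g ?Q] b1 by blast
  moreover have "{..<n} \<union> {n} = {..<Suc n}" by auto
  moreover have "?Q \<union> {g n} = Q" using q(1) gn by auto
  ultimately have bij: "bij_betw g {..<Suc n} Q" by simp
  have "\<forall>a<Suc n. \<forall>b<Suc n. le (g a) (g b) \<longrightarrow> a \<le> b"
  proof (intro allI impI)
    fix a b assume a: "a < Suc n" and b: "b < Suc n" and l: "le (g a) (g b)"
    show "a \<le> b"
    proof (cases "b = n")
      case True then show ?thesis using a by simp
    next
      case False
      then have bn: "b < n" using b by simp
      have gb: "g b = g' b" "g' b \<in> ?Q" using bn g'(1) unfolding g_def by (auto simp: bij_betw_def)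
      show ?thesis
      proof (cases "a = n")
        case True
        then have "le q (g' b)" using l gb unfolding g_def by simp
        then have "g' b = q" using q(2) gb by blast
        then show ?thesis using gb by simp
      next
        case False
        then have "a < n" using a by simp
        then show ?thesis using g'(2) bn l gb unfolding g_def by simp
      qed
    qed
  qed
  then show ?case unfolding Suc.hyps(2)[symmetric] using bij by blast
qed

lemma cutting_empty:
  assumes "U \<in> filters P le"
  shows "cutting_on (filters P le) rev_incl U {}"
proof -
  have e: "{} \<in> filters P le" unfolding filters_def by simp
  have "\<forall>C. maximal_chain_on (filters P le) rev_incl C \<longrightarrow> C \<inter> interval_on (filters P le) rev_incl U {} \<noteq> {}"
  proof (intro allI impI)
    fix C assume C: "maximal_chain_on (filters P le) rev_incl C"
    have "is_chain_on (filters P le) rev_incl (insert {} C)"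
      using C e unfolding maximal_chain_on_def is_chain_on_def rev_incl_def by blast
    then have "insert {} C = C" using C unfolding maximal_chain_on_def by blast
    then have "{} \<in> C" by blast
    moreover have "{} \<in> interval_on (filters P le) rev_incl U {}"
      unfolding interval_on_def rev_incl_def using e by simp
    ultimately show "C \<inter> interval_on (filters P le) rev_incl U {} \<noteq> {}" by blast
  qed
  then show ?thesis unfolding cutting_on_def rev_incl_def using assms e by simp
qed

lemma expansion_step:
  assumes po: "partial_order_on' {..<n} R" and lin: "\<forall>a<n. \<forall>b<n. R a b \<longrightarrow> a \<le> b"
    and i: "i < n"
  shows "is_expansion_poset {..<i} R ({..<i} - {z. R z i}) {} i {..<Suc i} R"
proof -
  let ?X = "{z\<in>{..<i}. R z i}"
  have D: "{..<i} - ({..<i} - {z. R z i}) = ?X" by auto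
  have me: "minimal_elems {} R = {}" by (simp add: minimal_elems_def)
  have poX: "partial_order_on' ?X R" by (rule po_sub[OF po]) (use i in auto)
  have key: "\<And>z. z < i \<Longrightarrow> R z i \<longleftrightarrow> (\<exists>s\<in>maximal_elems ?X R. R z s)"
  proof
    fix z assume z: "z < i" "R z i"
    then show "\<exists>s\<in>maximal_elems ?X R. R z s" using finite_max_above[OF _ poX, of z] by simp
  next
    fix z assume z: "z < i" and "\<exists>s\<in>maximal_elems ?X R. R z s"
    then obtain s where s: "s < i" "R s i" "R z s" unfolding maximal_elems_def by blast
    show "R z i" using po_trans[OF po, of z s i] s z i by simp
  qed
  have "\<forall>z\<in>insert i {..<i}. \<forall>w\<in>insert i {..<i}.
          R z w \<longleftrightarrow> expansion_order {..<i} R ({..<i} - {z. R z i}) {} i z w"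
  proof (intro ballI)
    fix z w assume z: "z \<in> insert i {..<i}" and w: "w \<in> insert i {..<i}"
    show "R z w \<longleftrightarrow> expansion_order {..<i} R ({..<i} - {z. R z i}) {} i z w"
      unfolding expansion_order_def D me
    proof (cases "z = i")
      case True
      show "R z w \<longleftrightarrow> (z \<in> {..<i} \<and> w \<in> {..<i} \<and> R z w \<or> z = i \<and> w = i \<or>
        z \<in> {..<i} \<and> w = i \<and> (\<exists>s\<in>maximal_elems ?X R. R z s) \<or>
        z = i \<and> w \<in> {..<i} \<and> (\<exists>s\<in>{}. R s w))"
      proof (cases "w = i")
        case True
        then show ?thesis using \<open>z = i\<close> po_refl[OF po, of i] i by simp
      next
        case False
        then have "w < i" using w by simp
        have "\<not> R i w"
        proof
          assume "R i w"
          moreover have "w < n" using \<open>w < i\<close> i by simp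
          ultimately have "i \<le> w" using lin i by blast
          then show False using \<open>w < i\<close> by simp
        qed
        then show ?thesis using \<open>z = i\<close> False by simp
      qed
    next
      case False
      then have zi: "z < i" using z by simp
      show "R z w \<longleftrightarrow> (z \<in> {..<i} \<and> w \<in> {..<i} \<and> R z w \<or> z = i \<and> w = i \<or>
        z \<in> {..<i} \<and> w = i \<and> (\<exists>s\<in>maximal_elems ?X R. R z s) \<or>
        z = i \<and> w \<in> {..<i} \<and> (\<exists>s\<in>{}. R s w))"
      proof (cases "w = i")
        case True
        then show ?thesis using key[OF zi] zi False by simp
      next
        case False
        then show ?thesis using zi w \<open>z \<noteq> i\<close> by simp
      qed
    qed
  qed
  moreover have "{..<Suc i} = insert i {..<i}" by auto
  ultimately show ?thesis unfolding is_expansion_poset_def by simp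
qed

theorem corollary2:
  fixes A :: "'a set" and le :: "'a \<Rightarrow> 'a \<Rightarrow> bool"
  assumes "finite_distrib_lattice_on A le"
    and "\<exists>x\<in>A. \<exists>y\<in>A. x \<noteq> y"
  shows "\<exists>(m::nat) (P :: nat \<Rightarrow> nat set) (ord :: nat \<Rightarrow> nat \<Rightarrow> nat \<Rightarrow> bool)
            (U0 :: nat \<Rightarrow> nat set) (U1 :: nat \<Rightarrow> nat set) (x :: nat \<Rightarrow> nat).
           P 0 = {} \<and>
           (\<forall>i<m. finite (P i) \<and> partial_order_on' (P i) (ord i) \<and>
              U0 (Suc i) \<in> filters (P i) (ord i) \<and> U1 (Suc i) \<in> filters (P i) (ord i) \<and>
              cutting_on (filters (P i) (ord i)) rev_incl (U0 (Suc i)) (U1 (Suc i)) \<and>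
              is_expansion_poset (P i) (ord i) (U0 (Suc i)) (U1 (Suc i)) (x (Suc i))
                                 (P (Suc i)) (ord (Suc i))) \<and>
           order_iso (filters (P m) (ord m)) rev_incl A le"
proof -
  note DD = fdl_D[OF assms(1)]
  let ?J = "jp A le"
  have fJ: "finite ?J" by (rule finite_subset[OF _ DD(1)]) (auto simp: jp_def)
  have poJ: "partial_order_on' ?J le" by (rule po_sub[OF DD(3)]) (auto simp: jp_def)
  obtain g where g: "bij_betw g {..<card ?J} ?J"
      "\<forall>a<card ?J. \<forall>b<card ?J. le (g a) (g b) \<longrightarrow> a \<le> b"
    using linext[OF fJ poJ] by blast
  define n where "n = card ?J"
  define R where "R a b = le (g a) (g b)" for a b
  have gb: "bij_betw g {..<n} ?J" using g(1) unfolding n_def .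
  have gN: "\<And>a. a < n \<Longrightarrow> g a \<in> ?J" using gb by (auto simp: bij_betw_def)
  have ginj: "inj_on g {..<n}" using gb by (auto simp: bij_betw_def)
  have poR: "partial_order_on' {..<n} R" unfolding partial_order_on'_def
  proof (intro conjI ballI impI)
    fix x assume "x \<in> {..<n}" then show "R x x" unfolding R_def using po_refl[OF poJ] gN by simp
  next
    fix x y assume xy: "x \<in> {..<n}" "y \<in> {..<n}" "R x y \<and> R y x"
    then have "g x = g y" unfolding R_def using po_antisym[OF poJ] gN by simp
    then show "x = y" using ginj xy unfolding inj_on_def by blast
  next
    fix x y z assume xyz: "x \<in> {..<n}" "y \<in> {..<n}" "z \<in> {..<n}" "R x y \<and> R y z"
    then show "R x z" unfolding R_def using po_trans[OF poJ] gN by (meson lessThan_iff)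
  qed
  have lin: "\<forall>a<n. \<forall>b<n. R a b \<longrightarrow> a \<le> b" using g(2) unfolding R_def n_def by simp
  have "order_iso (filters {..<n} R) rev_incl (filters ?J le) rev_incl"
    by (rule filters_transfer[OF gb]) (simp add: R_def)
  then have iso: "order_iso (filters {..<n} R) rev_incl A le"
    using order_iso_trans order_iso_sym[OF birkhoff[OF assms(1)]] by blast
  have step: "\<And>i. i < n \<Longrightarrow> finite {..<i} \<and> partial_order_on' {..<i} R \<and>
      ({..<i} - {z. R z i}) \<in> filters {..<i} R \<and> {} \<in> filters {..<i} R \<and>
      cutting_on (filters {..<i} R) rev_incl ({..<i} - {z. R z i}) {} \<and>
      is_expansion_poset {..<i} R ({..<i} - {z. R z i}) {} i {..<Suc i} R"
  proof -
    fix i assume i: "i < n"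
    have "\<forall>x\<in>{..<i} - {z. R z i}. \<forall>y\<in>{..<i}. R x y \<longrightarrow> y \<in> {..<i} - {z. R z i}"
    proof (intro ballI impI)
      fix x y assume x: "x \<in> {..<i} - {z. R z i}" and y: "y \<in> {..<i}" and xy: "R x y"
      show "y \<in> {..<i} - {z. R z i}"
      proof (rule ccontr)
        assume "y \<notin> {..<i} - {z. R z i}"
        then have "R y i" using y by simp
        then have "R x i" using po_trans[OF poR, of x y i] i x y xy by simp
        then show False using x by simp
      qed
    qed
    then have U0: "({..<i} - {z. R z i}) \<in> filters {..<i} R" unfolding filters_def by blast
    have "partial_order_on' {..<i} R" by (rule po_sub[OF poR]) (use i in auto)
    moreover have "{} \<in> filters {..<i} R" unfolding filters_def by simp
    ultimately show "?thesis i" using U0 cutting_empty[OF U0] expansion_step[OF poR lin i] by simp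
  qed
  show ?thesis
    apply (rule exI[of _ n], rule exI[of _ "\<lambda>i. {..<i}"], rule exI[of _ "\<lambda>_. R"],
        rule exI[of _ "\<lambda>k. {..<k - 1} - {z. R z (k - 1)}"], rule exI[of _ "\<lambda>_. {}"],
        rule exI[of _ "\<lambda>k. k - 1"])
    using step iso by simp
qed

end
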